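(* Let $L:(0,\infty)\to(0,\infty)$ be an $L$-function (see context) and let $U=\{D(z_n,r_n)\}_n$ be an $L$-set. Let $\phi\in[0,2\pi]$. Then the set $C\subset(0,\infty)$ of those $c>0$ for which the boundary $\partial\Lambda(L,\phi,c)$ intersects infinitely many of the discs $D(z_n,r_n)$ has Lebesgue measure zero. Moreover, the projection $E$ of $U$ onto $[1,\infty)$ satisfies $\int_E\frac{dx}{L(x)}<\infty$.
   Context: An $L$-function is a strictly decreasing, continuous, convex function $L:(0,\infty)\to(0,\infty)$ with $L(x)\to0^+$ as $x\to\infty$, satisfying: there exist constants $\beta\in(0,1)$ and $R\ge1$ such that $L(2x)\ge\beta L(x)$ for all $x\ge R$. $D(z_0,r)=\{z:|z-z_0|<r\}$. An $L$-set is a countable collection of discs $D(z_n,r_n)$ with $z_n\in\mathbb{C}$, $|z_n|\to\infty$, $r_n>0$ and $\sum_n\frac{r_n}{L(|z_n|)}<\infty$. For $\phi\in[0,2\pi]$, $c>0$: $\Lambda(L,\phi,c)=\{z\in\mathbb{C}: |\operatorname{Im}(ze^{-i\phi})|\le cL(\operatorname{Re}(ze^{-i\phi})),\ \operatorname{Re}(ze^{-i\phi})\ge R\}$. The projection of $U$ onto $[1,\infty)$ is $E=\{|z|: z\in\bigcup_n D(z_n,r_n)\}\cap[1,\infty)$. *)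

theory Defs
  imports "HOL-Analysis.Analysis"
begin

definition L_function :: "(real \<Rightarrow> real) \<Rightarrow> real \<Rightarrow> real \<Rightarrow> bool" where
  "L_function L \<beta> R \<longleftrightarrow>
     (\<forall>x>0. L x > 0) \<and>
     (\<forall>x y. 0 < x \<longrightarrow> x < y \<longrightarrow> L y < L x) \<and>
     continuous_on {0<..} L \<and>
     convex_on {0<..} L \<and>
     (L \<longlongrightarrow> 0) at_top \<and>
     0 < \<beta> \<and> \<beta> < 1 \<and> R \<ge> 1 \<and>
     (\<forall>x\<ge>R. L (2 * x) \<ge> \<beta> * L x)"

definition L_set :: "(real \<Rightarrow> real) \<Rightarrow> (nat \<Rightarrow> complex) \<Rightarrow> (nat \<Rightarrow> real) \<Rightarrow> bool" where
  "L_set L z r \<longleftrightarrow>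
     filterlim (\<lambda>n. norm (z n)) at_top sequentially \<and>
     (\<forall>n. r n > 0) \<and>
     summable (\<lambda>n. r n / L (norm (z n)))"

definition Lambda_set :: "(real \<Rightarrow> real) \<Rightarrow> real \<Rightarrow> real \<Rightarrow> real \<Rightarrow> complex set" where
  "Lambda_set L R \<phi> c =
     {z. \<bar>Im (z * cis (-\<phi>))\<bar> \<le> c * L (Re (z * cis (-\<phi>))) \<and> Re (z * cis (-\<phi>)) \<ge> R}"

definition projection_set :: "(nat \<Rightarrow> complex) \<Rightarrow> (nat \<Rightarrow> real) \<Rightarrow> real set" where
  "projection_set z r = (norm ` (\<Union>n. ball (z n) (r n))) \<inter> {1..}"

end

theory Submission imports Defs begin

lemma Lf_pos: "L_function L \<beta> R \<Longrightarrow> 0 < x \<Longrightarrow> 0 < L x"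
  by (simp add: L_function_def)

lemma Lf_mono: "L_function L \<beta> R \<Longrightarrow> 0 < x \<Longrightarrow> x \<le> y \<Longrightarrow> L y \<le> L x"
  unfolding L_function_def by (cases "x = y") (auto simp: less_imp_le)

lemma Lf_double: "L_function L \<beta> R \<Longrightarrow> R \<le> x \<Longrightarrow> \<beta> * L x \<le> L (2 * x)"
  by (simp add: L_function_def)

lemma Lf_convex:
  assumes L: "L_function L \<beta> R" and "0 < a" "a < x" "x < y"
  shows "(L x - L y) * (y - a) \<le> (y - x) * (L a - L y)"
proof -
  have cv: "convex_on {0<..} L" using L by (simp add: L_function_def)
  define t where "t = (x - a) / (y - a)"
  have t0: "0 \<le> t" "t \<le> 1" using assms by (auto simp: t_def divide_simps)
  have ya: "y - a \<noteq> 0" using assms by simp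
  have ty: "t * (y - a) = x - a" using ya by (simp add: t_def)
  have xe: "(1 - t) *\<^sub>R a + t *\<^sub>R y = x"
  proof -
    have "(1 - t) *\<^sub>R a + t *\<^sub>R y = a + t * (y - a)" by (simp add: algebra_simps)
    then show ?thesis using ty by simp
  qed
  have "L x \<le> (1 - t) * L a + t * L y"
    using convex_onD[OF cv t0, of a y] xe assms by simp
  then have "L x * (y - a) \<le> ((1 - t) * L a + t * L y) * (y - a)"
    using assms by (intro mult_right_mono) auto
  also have "\<dots> = ((1 - t) * (y - a)) * L a + (t * (y - a)) * L y"
    by (simp add: algebra_simps)
  also have "\<dots> = (y - x) * L a + (x - a) * L y"
  proof -
    have ty2: "(1 - t) * (y - a) = y - x" using ty by (simp add: algebra_simps)
    show ?thesis unfolding ty ty2 by (rule refl)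
  qed
  finally show ?thesis by (simp add: algebra_simps)
qed

lemma Lf_bounds:
  assumes L: "L_function L \<beta> R" and "0 < u - \<rho>" "u - \<rho> < x" "x < u + \<rho>"
    "v - \<rho> < y" "y < v + \<rho>" "0 \<le> y"
  shows "(v - \<rho>) / L (u - \<rho>) \<le> y / L x \<and> y / L x \<le> (v + \<rho>) / L (u + \<rho>)"
proof -
  have p1: "0 < L (u - \<rho>)" "0 < L x" "0 < L (u + \<rho>)" using assms Lf_pos[OF L] by auto
  have m1: "L x \<le> L (u - \<rho>)" using assms Lf_mono[OF L, of "u - \<rho>" x] by auto
  have m2: "L (u + \<rho>) \<le> L x" using assms Lf_mono[OF L, of x "u + \<rho>"] by auto
  have "y / L x \<le> (v + \<rho>) / L x" using p1 assms by (intro divide_right_mono) auto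
  also have "\<dots> \<le> (v + \<rho>) / L (u + \<rho>)" using p1 m2 assms by (intro divide_left_mono) auto
  finally have up: "y / L x \<le> (v + \<rho>) / L (u + \<rho>)" .
  have lo: "(v - \<rho>) / L (u - \<rho>) \<le> y / L x"
  proof (cases "v - \<rho> \<le> 0")
    case True
    then have "(v - \<rho>) / L (u - \<rho>) \<le> 0" using p1 by (simp add: divide_nonpos_pos)
    also have "0 \<le> y / L x" using p1 assms by simp
    finally show ?thesis .
  next
    case False
    have "(v - \<rho>) / L (u - \<rho>) \<le> (v - \<rho>) / L x" using False p1 m1 by (intro divide_left_mono) auto
    also have "\<dots> \<le> y / L x" using p1 assms by (intro divide_right_mono) auto
    finally show ?thesis .
  qed
  show ?thesis using up lo by simp
qed

lemma Lf_width:
  assumes L: "L_function L \<beta> R" and k: "0 \<le> k" and \<rho>: "0 < \<rho>" and u: "2 * R \<le> u" "2 * \<rho> < u"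
    "Z \<le> 2 * u" "u \<le> Z" and Z: "1 \<le> Z" and v: "v - \<rho> \<le> k * L (u - \<rho>)"
  shows "(v + \<rho>) / L (u + \<rho>) - (v - \<rho>) / L (u - \<rho>)
          \<le> (2 / \<beta> + 8 * k * L 1 / \<beta>^2) * \<rho> / L Z"
proof -
  have R1: "1 \<le> R" and b: "0 < \<beta>" "\<beta> < 1" using L by (auto simp: L_function_def)
  have upos: "0 < u" using u R1 by simp
  define A where "A = L (u - \<rho>)"
  define B where "B = L (u + \<rho>)"
  define H where "H = L (u / 2)"
  have Apos: "0 < A" unfolding A_def using Lf_pos[OF L] u \<rho> by simp
  have Bpos: "0 < B" unfolding B_def using Lf_pos[OF L] u \<rho> by simp
  have Hpos: "0 < H" unfolding H_def using Lf_pos[OF L] upos by simp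
  have LZpos: "0 < L Z" using Lf_pos[OF L] Z by simp
  have BA: "B \<le> A" unfolding A_def B_def using Lf_mono[OF L, of "u - \<rho>" "u + \<rho>"] u \<rho> by simp
  have conv: "(A - B) * ((u + \<rho>) - u / 2) \<le> ((u + \<rho>) - (u - \<rho>)) * (H - B)"
    unfolding A_def B_def H_def using Lf_convex[OF L, of "u / 2" "u - \<rho>" "u + \<rho>"] upos u \<rho> by simp
  have AB1: "(A - B) * (u / 2) \<le> 2 * \<rho> * H"
  proof -
    have "(A - B) * (u / 2) \<le> (A - B) * ((u + \<rho>) - u / 2)"
      using BA \<rho> by (intro mult_left_mono) auto
    also have "\<dots> \<le> 2 * \<rho> * (H - B)" using conv by simp
    also have "\<dots> \<le> 2 * \<rho> * H" using \<rho> Bpos by simp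
    finally show ?thesis .
  qed
  have B2: "L (2 * u) \<le> B" unfolding B_def using Lf_mono[OF L, of "u + \<rho>" "2 * u"] u \<rho> by simp
  have d1: "\<beta> * L u \<le> L (2 * u)" using Lf_double[OF L, of u] u R1 by simp
  have d2: "\<beta> * H \<le> L u" unfolding H_def using Lf_double[OF L, of "u / 2"] u by simp
  have LuZ: "L Z \<le> L u" using Lf_mono[OF L, of u Z] upos u by simp
  have Bge1: "\<beta> * L Z \<le> B" using B2 d1 LuZ b by (smt (verit) mult_left_mono)
  have Bge2: "\<beta>^2 * H \<le> B"
  proof -
    have "\<beta>^2 * H = \<beta> * (\<beta> * H)" by (simp add: power2_eq_square)
    also have "\<dots> \<le> \<beta> * L u" using d2 b by (intro mult_left_mono) auto
    finally show ?thesis using B2 d1 by simp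
  qed
  have T1: "2 * \<rho> / B \<le> 2 / \<beta> * \<rho> / L Z"
  proof -
    have "2 * \<rho> / B \<le> 2 * \<rho> / (\<beta> * L Z)"
      using Bge1 b LZpos Bpos \<rho> by (intro divide_left_mono) auto
    then show ?thesis by simp
  qed
  have T2a: "(v - \<rho>) * (1 / B - 1 / A) \<le> k * ((A - B) / B)"
  proof (cases "v - \<rho> \<le> 0")
    case True
    have "0 \<le> 1 / B - 1 / A" using Apos Bpos BA by (simp add: frac_le)
    then have "(v - \<rho>) * (1 / B - 1 / A) \<le> 0" using True by (simp add: mult_nonpos_nonneg)
    also have "0 \<le> k * ((A - B) / B)" using k BA Bpos by simp
    finally show ?thesis .
  next
    case False
    have "(v - \<rho>) * (1 / B - 1 / A) = ((v - \<rho>) / A) * ((A - B) / B)"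
      using Apos Bpos by (simp add: field_simps)
    also have "\<dots> \<le> k * ((A - B) / B)"
      using v Apos Bpos BA unfolding A_def[symmetric]
      by (intro mult_right_mono) (auto simp: divide_simps mult.commute)
    finally show ?thesis .
  qed
  have T2b: "(A - B) / B \<le> 4 * \<rho> / (\<beta>^2 * u)"
  proof -
    have "(A - B) \<le> 4 * \<rho> * H / u" using AB1 upos by (simp add: field_simps)
    then have "(A - B) / B \<le> (4 * \<rho> * H / u) / B" using Bpos by (intro divide_right_mono) auto
    also have "\<dots> \<le> (4 * \<rho> * H / u) / (\<beta>^2 * H)"
      using Bge2 b Hpos Bpos \<rho> upos by (intro divide_left_mono) auto
    also have "\<dots> = 4 * \<rho> / (\<beta>^2 * u)" using Hpos by (simp add: field_simps)
    finally show ?thesis .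
  qed
  have T2c: "4 * \<rho> / (\<beta>^2 * u) \<le> 8 * L 1 / \<beta>^2 * \<rho> / L Z"
  proof -
    have "4 * \<rho> / (\<beta>^2 * u) \<le> 4 * \<rho> / (\<beta>^2 * (Z / 2))"
      using b \<rho> u Z by (intro divide_left_mono mult_left_mono) auto
    also have "\<dots> = 8 * \<rho> / (\<beta>^2 * Z)" by simp
    also have "\<dots> \<le> 8 * \<rho> / \<beta>^2" using b \<rho> Z
      by (simp add: divide_simps mult_left_mono)
    also have "\<dots> \<le> 8 * \<rho> / \<beta>^2 * (L 1 / L Z)"
    proof -
      have "1 \<le> L 1 / L Z" using Lf_mono[OF L, of 1 Z] Z LZpos by simp
      moreover have "0 \<le> 8 * \<rho> / \<beta>^2" using \<rho> by simp
      ultimately have "8 * \<rho> / \<beta>^2 * 1 \<le> 8 * \<rho> / \<beta>^2 * (L 1 / L Z)"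
        by (intro mult_left_mono) auto
      then show ?thesis by simp
    qed
    also have "\<dots> = 8 * L 1 / \<beta>^2 * \<rho> / L Z" by simp
    finally show ?thesis .
  qed
  have "(v + \<rho>) / B - (v - \<rho>) / A = 2 * \<rho> / B + (v - \<rho>) * (1 / B - 1 / A)"
    using Apos Bpos by (simp add: field_simps)
  also have "\<dots> \<le> 2 / \<beta> * \<rho> / L Z + k * (8 * L 1 / \<beta>^2 * \<rho> / L Z)"
    using T1 T2a T2b T2c k by (smt (verit) mult_left_mono)
  also have "\<dots> = (2 / \<beta> + 8 * k * L 1 / \<beta>^2) * \<rho> / L Z"
    using b LZpos by (simp add: field_simps)
  finally show ?thesis unfolding A_def B_def .
qed

lemma Lf_cont_rot:
  assumes L: "L_function L \<beta> R" and S: "S \<subseteq> {p. R \<le> Re (p * cis (-\<phi>))}"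
  shows "continuous_on S (\<lambda>p. L (Re (p * cis (-\<phi>))))"
proof (rule continuous_on_compose2[of "{0<..}" L S "\<lambda>p. Re (p * cis (-\<phi>))"])
  show "continuous_on {0<..} L" using L by (simp add: L_function_def)
  show "continuous_on S (\<lambda>p. Re (p * cis (-\<phi>)))" by (intro continuous_intros)
  have "1 \<le> R" using L by (simp add: L_function_def)
  then show "(\<lambda>p. Re (p * cis (-\<phi>))) ` S \<subseteq> {0<..}" using S by force
qed

lemma Lambda_closed:
  assumes L: "L_function L \<beta> R"
  shows "closed (Lambda_set L R \<phi> c)"
proof -
  define S where "S = {p. R \<le> Re (p * cis (-\<phi>))}"
  define h where "h = (\<lambda>p. \<bar>Im (p * cis (-\<phi>))\<bar> - c * L (Re (p * cis (-\<phi>))))"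
  have cS: "closed S" unfolding S_def by (intro closed_Collect_le continuous_intros)
  have ch: "continuous_on S h" unfolding h_def
    by (intro continuous_intros Lf_cont_rot[OF L]) (simp add: S_def)
  have "closed (S \<inter> h -` {..0})" by (rule continuous_closed_preimage[OF ch cS]) auto
  moreover have "S \<inter> h -` {..0} = Lambda_set L R \<phi> c"
    unfolding S_def h_def Lambda_set_def by auto
  ultimately show ?thesis by simp
qed

lemma Lambda_open_sub:
  assumes L: "L_function L \<beta> R"
  shows "{p. R < Re (p * cis (-\<phi>)) \<and> \<bar>Im (p * cis (-\<phi>))\<bar> < c * L (Re (p * cis (-\<phi>)))}
          \<subseteq> interior (Lambda_set L R \<phi> c)"
proof (rule interior_maximal)
  define S where "S = {p. R < Re (p * cis (-\<phi>))}"
  define h where "h = (\<lambda>p. \<bar>Im (p * cis (-\<phi>))\<bar> - c * L (Re (p * cis (-\<phi>))))"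
  have oS: "open S" unfolding S_def by (intro open_Collect_less continuous_intros)
  have ch: "continuous_on S h" unfolding h_def
    by (intro continuous_intros Lf_cont_rot[OF L]) (auto simp: S_def)
  have "open (S \<inter> h -` {..<0})" by (rule continuous_open_preimage[OF ch oS]) auto
  moreover have "S \<inter> h -` {..<0} = {p. R < Re (p * cis (-\<phi>)) \<and> \<bar>Im (p * cis (-\<phi>))\<bar> < c * L (Re (p * cis (-\<phi>)))}"
    unfolding S_def h_def by auto
  ultimately show "open {p. R < Re (p * cis (-\<phi>)) \<and> \<bar>Im (p * cis (-\<phi>))\<bar> < c * L (Re (p * cis (-\<phi>)))}" by simp
  show "{p. R < Re (p * cis (-\<phi>)) \<and> \<bar>Im (p * cis (-\<phi>))\<bar> < c * L (Re (p * cis (-\<phi>)))} \<subseteq> Lambda_set L R \<phi> c"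
    unfolding Lambda_set_def by auto
qed

lemma frontier_1:
  assumes L: "L_function L \<beta> R" and p: "p \<in> frontier (Lambda_set L R \<phi> c)"
  shows "R \<le> Re (p * cis (-\<phi>)) \<and> \<bar>Im (p * cis (-\<phi>))\<bar> \<le> c * L (Re (p * cis (-\<phi>)))"
proof -
  have "p \<in> closure (Lambda_set L R \<phi> c)" using p by (simp add: frontier_def)
  then have "p \<in> Lambda_set L R \<phi> c" using Lambda_closed[OF L] closure_closed by metis
  then show ?thesis unfolding Lambda_set_def by auto
qed

lemma frontier_2:
  assumes L: "L_function L \<beta> R" and p: "p \<in> frontier (Lambda_set L R \<phi> c)"
    and r: "R < Re (p * cis (-\<phi>))"
  shows "\<bar>Im (p * cis (-\<phi>))\<bar> = c * L (Re (p * cis (-\<phi>)))"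
proof -
  have "p \<notin> interior (Lambda_set L R \<phi> c)" using p by (simp add: frontier_def)
  then have "\<not> \<bar>Im (p * cis (-\<phi>))\<bar> < c * L (Re (p * cis (-\<phi>)))"
    using Lambda_open_sub[OF L, of \<phi> c] r by blast
  then show ?thesis using frontier_1[OF L p] by linarith
qed

lemma frontier_3:
  assumes L: "L_function L \<beta> R" and r: "R < Re (p * cis (-\<phi>))"
    and e: "\<bar>Im (p * cis (-\<phi>))\<bar> = c * L (Re (p * cis (-\<phi>)))"
  shows "p \<in> frontier (Lambda_set L R \<phi> c)"
proof -
  have pin: "p \<in> Lambda_set L R \<phi> c" using r e unfolding Lambda_set_def by auto
  have "p \<notin> interior (Lambda_set L R \<phi> c)"
  proof
    assume "p \<in> interior (Lambda_set L R \<phi> c)"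
    then obtain eps where eps: "eps > 0" "ball p eps \<subseteq> Lambda_set L R \<phi> c"
      by (meson mem_interior)
    define \<sigma> :: real where "\<sigma> = (if Im (p * cis (-\<phi>)) \<ge> 0 then 1 else -1)"
    define q where "q = p + complex_of_real (eps / 2 * \<sigma>) * \<i> * cis \<phi>"
    have cc: "cis \<phi> * cis (-\<phi>) = 1" by (simp add: cis_mult)
    have rq: "q * cis (-\<phi>) = p * cis (-\<phi>) + complex_of_real (eps / 2 * \<sigma>) * \<i>"
      unfolding q_def using cc by (simp add: algebra_simps)
    have "dist p q = eps / 2" unfolding q_def dist_norm
      by (simp add: norm_mult \<sigma>_def eps(1) less_imp_le)
    then have "q \<in> ball p eps" using eps by simp
    then have "q \<in> Lambda_set L R \<phi> c" using eps by blast
    then have "\<bar>Im (q * cis (-\<phi>))\<bar> \<le> c * L (Re (q * cis (-\<phi>)))" unfolding Lambda_set_def by auto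
    moreover have "Re (q * cis (-\<phi>)) = Re (p * cis (-\<phi>))" using rq by simp
    moreover have "\<bar>Im (q * cis (-\<phi>))\<bar> = \<bar>Im (p * cis (-\<phi>))\<bar> + eps / 2"
      using rq eps(1) by (auto simp: \<sigma>_def)
    ultimately show False using e eps(1) by simp
  qed
  then show ?thesis using pin closure_subset by (auto simp: frontier_def)
qed

lemma Lset_ev:
  assumes L: "L_function L \<beta> R" and U: "L_set L z r"
  shows "\<forall>M. eventually (\<lambda>n. M \<le> norm (z n)) sequentially"
    and "eventually (\<lambda>n. r n \<le> 1) sequentially"
proof -
  have lim: "filterlim (\<lambda>n. norm (z n)) at_top sequentially" using U by (simp add: L_set_def)
  show ev: "\<forall>M. eventually (\<lambda>n. M \<le> norm (z n)) sequentially"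
    using lim by (simp add: filterlim_at_top)
  have sm: "summable (\<lambda>n. r n / L (norm (z n)))" using U by (simp add: L_set_def)
  have t0: "(\<lambda>n. r n / L (norm (z n))) \<longlonglongrightarrow> 0" by (rule summable_LIMSEQ_zero[OF sm])
  have L1: "0 < L 1" using Lf_pos[OF L] by simp
  have e1: "eventually (\<lambda>n. r n / L (norm (z n)) < 1 / L 1) sequentially"
    using order_tendstoD(2)[OF t0, of "1 / L 1"] L1 by simp
  show "eventually (\<lambda>n. r n \<le> 1) sequentially"
    using e1 ev[rule_format, of 1]
  proof eventually_elim
    case (elim n)
    have p: "0 < L (norm (z n))" using elim by (intro Lf_pos[OF L]) linarith
    have m: "L (norm (z n)) \<le> L 1" using Lf_mono[OF L, of 1 "norm (z n)"] elim by simp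
    have "r n < L (norm (z n)) / L 1" using elim(1) p by (simp add: field_simps)
    also have "\<dots> \<le> 1" using m L1 by simp
    finally show ?case by simp
  qed
qed

lemma part2:
  assumes L: "L_function L \<beta> R" and U: "L_set L z r"
  shows "(\<integral>\<^sup>+ x. indicator (projection_set z r) x * ennreal (1 / L x) \<partial>lborel) < \<infinity>"
proof -
  define Z where "Z n = norm (z n)" for n
  define a where "a n = 2 * r n / L (Z n + r n)" for n
  have rpos: "\<And>n. 0 < r n" using U by (simp add: L_set_def)
  have sm: "summable (\<lambda>n. r n / L (Z n))" using U by (simp add: L_set_def Z_def)
  have b: "0 < \<beta>" and R1: "1 \<le> R" using L by (auto simp: L_function_def)
  have Lp: "\<And>n. 0 < L (Z n + r n)" using Lf_pos[OF L] rpos by (simp add: Z_def add_nonneg_pos)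
  have apos: "\<And>n. 0 \<le> a n" using Lp rpos by (simp add: a_def less_imp_le)
  have suma: "summable a"
  proof (rule summable_comparison_test_ev)
    show "summable (\<lambda>n. (2 / \<beta>) * (r n / L (Z n)))" using sm by (rule summable_mult)
    show "eventually (\<lambda>n. norm (a n) \<le> (2 / \<beta>) * (r n / L (Z n))) sequentially"
      using Lset_ev(1)[OF L U, rule_format, of R] Lset_ev(2)[OF L U]
    proof eventually_elim
      case (elim n)
      have ZR: "R \<le> Z n" using elim by (simp add: Z_def)
      have "\<beta> * L (Z n) \<le> L (2 * Z n)" using Lf_double[OF L ZR] .
      also have "\<dots> \<le> L (Z n + r n)" using Lf_mono[OF L, of "Z n + r n" "2 * Z n"] rpos[of n] ZR R1 elim(2)
        by (simp add: Z_def add_nonneg_pos)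
      finally have bl: "\<beta> * L (Z n) \<le> L (Z n + r n)" .
      have LZ: "0 < L (Z n)" using Lf_pos[OF L] ZR R1 by simp
      have "norm (a n) = a n" using apos[of n] by simp
      also have "\<dots> = 2 * r n / L (Z n + r n)" by (simp add: a_def)
      also have "\<dots> \<le> 2 * r n / (\<beta> * L (Z n))"
        using bl b LZ rpos[of n] Lp[of n] by (intro divide_left_mono) auto
      also have "\<dots> = (2 / \<beta>) * (r n / L (Z n))" by simp
      finally show ?case .
    qed
  qed
  define f where "f n x = ennreal (1 / L (Z n + r n)) * indicator {Z n - r n <..< Z n + r n} x" for n x
  have pw: "indicator (projection_set z r) x * ennreal (1 / L x) \<le> (\<Sum>n. f n x)" for x
  proof (cases "x \<in> projection_set z r")
    case False then show ?thesis by simp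
  next
    case True
    then obtain w n where w: "w \<in> ball (z n) (r n)" "x = norm w" "1 \<le> x"
      unfolding projection_set_def by auto
    have d: "\<bar>norm w - Z n\<bar> < r n"
      using w(1) norm_triangle_ineq3[of w "z n"] by (simp add: Z_def dist_norm norm_minus_commute)
    then have xin: "x \<in> {Z n - r n <..< Z n + r n}" using w by auto
    have "ennreal (1 / L x) \<le> ennreal (1 / L (Z n + r n))"
    proof (rule ennreal_leI)
      have "L (Z n + r n) \<le> L x" using Lf_mono[OF L, of x "Z n + r n"] xin w(3) by simp
      then show "1 / L x \<le> 1 / L (Z n + r n)" using Lp[of n] by (simp add: frac_le)
    qed
    also have "\<dots> = f n x" using xin by (simp add: f_def)
    also have "\<dots> \<le> (\<Sum>n. f n x)" using sum_le_suminf[OF summableI, of "{n}" "\<lambda>n. f n x"] by simp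
    finally show ?thesis using True by simp
  qed
  have "(\<integral>\<^sup>+ x. indicator (projection_set z r) x * ennreal (1 / L x) \<partial>lborel)
        \<le> (\<integral>\<^sup>+ x. (\<Sum>n. f n x) \<partial>lborel)"
    by (rule nn_integral_mono) (use pw in auto)
  also have "\<dots> = (\<Sum>n. \<integral>\<^sup>+ x. f n x \<partial>lborel)"
    by (rule nn_integral_suminf) (simp add: f_def)
  also have "\<dots> = (\<Sum>n. ennreal (a n))"
  proof (rule suminf_cong)
    fix n
    have "(\<integral>\<^sup>+ x. f n x \<partial>lborel) = ennreal (1 / L (Z n + r n)) * emeasure lborel {Z n - r n <..< Z n + r n}"
      unfolding f_def by (rule nn_integral_cmult_indicator) simp
    also have "\<dots> = ennreal (1 / L (Z n + r n)) * ennreal (2 * r n)"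
      using rpos[of n] by simp
    also have "\<dots> = ennreal (a n)" using Lp[of n] rpos[of n]
      by (simp add: a_def ennreal_mult'[symmetric] less_imp_le)
    finally show "(\<integral>\<^sup>+ x. f n x \<partial>lborel) = ennreal (a n)" .
  qed
  also have "\<dots> < \<infinity>" using ennreal_suminf_neq_top[OF suma apos] by (simp add: top.not_eq_extremum)
  finally show ?thesis .
qed

lemma rot_dist: "norm (p * cis (-\<phi>) - q * cis (-\<phi>)) = norm (p - q)"
proof -
  have "p * cis (-\<phi>) - q * cis (-\<phi>) = (p - q) * cis (-\<phi>)" by (simp add: algebra_simps)
  then show ?thesis by (simp add: norm_mult)
qed

lemma rot_norm: "norm (p * cis (-\<phi>)) = norm p"
  by (simp add: norm_mult)

lemma G_interval:
  assumes L: "L_function L \<beta> R"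
  shows "is_interval ((\<lambda>p. \<bar>Im (p * cis (-\<phi>))\<bar> / L (Re (p * cis (-\<phi>)))) ` (ball w \<rho> \<inter> {p. R < Re (p * cis (-\<phi>))}))"
proof -
  have R1: "1 \<le> R" using L by (simp add: L_function_def)
  have H: "{p. R < Re (p * cis (-\<phi>))} = {p. inner (cnj (cis (-\<phi>))) p > R}"
    by (auto simp: inner_complex_def algebra_simps)
  have cv: "convex (ball w \<rho> \<inter> {p. R < Re (p * cis (-\<phi>))})"
    unfolding H by (intro convex_Int convex_ball convex_halfspace_gt)
  have ct: "continuous_on (ball w \<rho> \<inter> {p. R < Re (p * cis (-\<phi>))})
             (\<lambda>p. \<bar>Im (p * cis (-\<phi>))\<bar> / L (Re (p * cis (-\<phi>))))"
  proof (rule continuous_on_divide)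
    show "continuous_on (ball w \<rho> \<inter> {p. R < Re (p * cis (-\<phi>))}) (\<lambda>p. \<bar>Im (p * cis (-\<phi>))\<bar>)"
      by (intro continuous_intros)
    show "continuous_on (ball w \<rho> \<inter> {p. R < Re (p * cis (-\<phi>))}) (\<lambda>p. L (Re (p * cis (-\<phi>))))"
      by (rule Lf_cont_rot[OF L]) auto
    show "\<forall>p\<in>ball w \<rho> \<inter> {p. R < Re (p * cis (-\<phi>))}. L (Re (p * cis (-\<phi>))) \<noteq> 0"
    proof
      fix p assume "p \<in> ball w \<rho> \<inter> {p. R < Re (p * cis (-\<phi>))}"
      then have "0 < Re (p * cis (-\<phi>))" using R1 by auto
      then show "L (Re (p * cis (-\<phi>))) \<noteq> 0" using Lf_pos[OF L] by force
    qed
  qed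
  show ?thesis unfolding is_interval_connected_1
    by (rule connected_continuous_image[OF ct convex_connected[OF cv]])
qed

lemma part1k:
  assumes L: "L_function L \<beta> R" and U: "L_set L z r" and k: "0 \<le> k"
  shows "{c::real. c > 0 \<and> infinite {n. frontier (Lambda_set L R \<phi> c) \<inter> ball (z n) (r n) \<noteq> {}}} \<inter> {..k}
           \<in> null_sets lborel"
proof -
  define g where "g p = \<bar>Im (p * cis (-\<phi>))\<bar> / L (Re (p * cis (-\<phi>)))" for p
  define Hs where "Hs = {p. R < Re (p * cis (-\<phi>))}"
  define KL where "KL = k * L R"
  define M where "M = 4 * R + 2 * KL + 10"
  define Kc where "Kc = 2 / \<beta> + 8 * k * L 1 / \<beta>^2"
  have R1: "1 \<le> R" and b: "0 < \<beta>" using L by (auto simp: L_function_def)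
  have LRpos: "0 < L R" using Lf_pos[OF L] R1 by simp
  have KL0: "0 \<le> KL" using k LRpos by (simp add: KL_def)
  have Kc0: "0 \<le> Kc" using b k Lf_pos[OF L, of 1] by (simp add: Kc_def)
  have rpos: "\<And>n. 0 < r n" using U by (simp add: L_set_def)
  have sm: "summable (\<lambda>n. r n / L (norm (z n)))" using U by (simp add: L_set_def)
  obtain N where N: "\<And>n. n \<ge> N \<Longrightarrow> M \<le> norm (z n) \<and> r n \<le> 1"
    using eventually_conj[OF Lset_ev(1)[OF L U, rule_format, of M] Lset_ev(2)[OF L U]]
    unfolding eventually_sequentially by blast
  have cl: "Re (z n * cis (-\<phi>)) - r n < Re (p * cis (-\<phi>)) \<and> Re (p * cis (-\<phi>)) < Re (z n * cis (-\<phi>)) + r n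
     \<and> \<bar>Im (z n * cis (-\<phi>))\<bar> - r n < \<bar>Im (p * cis (-\<phi>))\<bar> \<and> \<bar>Im (p * cis (-\<phi>))\<bar> < \<bar>Im (z n * cis (-\<phi>))\<bar> + r n"
    if "p \<in> ball (z n) (r n)" for p n
  proof -
    define d where "d = p * cis (-\<phi>) - z n * cis (-\<phi>)"
    have nd: "norm d < r n" using that rot_dist[of p \<phi> "z n"] by (simp add: d_def dist_norm norm_minus_commute)
    have "\<bar>Re d\<bar> < r n" using abs_Re_le_cmod[of d] nd by linarith
    moreover have "\<bar>Im d\<bar> < r n" using abs_Im_le_cmod[of d] nd by linarith
    ultimately show ?thesis unfolding d_def by auto
  qed
  have yKL: "\<bar>Im (p * cis (-\<phi>))\<bar> \<le> KL"
    if "c \<le> k" "0 < c" "R \<le> Re (p * cis (-\<phi>))" "\<bar>Im (p * cis (-\<phi>))\<bar> \<le> c * L (Re (p * cis (-\<phi>)))" for c p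
  proof -
    have lx: "0 < L (Re (p * cis (-\<phi>)))" using that R1 by (intro Lf_pos[OF L]) linarith
    have lxR: "L (Re (p * cis (-\<phi>))) \<le> L R" using that R1 by (intro Lf_mono[OF L]) auto
    have "c * L (Re (p * cis (-\<phi>))) \<le> k * L (Re (p * cis (-\<phi>)))" using that lx by (intro mult_right_mono) auto
    also have "\<dots> \<le> k * L R" using lxR k by (intro mult_left_mono) auto
    finally show ?thesis using that by (simp add: KL_def)
  qed
  have normb: "norm (z n) \<le> Re (p * cis (-\<phi>)) + \<bar>Im (p * cis (-\<phi>))\<bar> + r n"
    if "p \<in> ball (z n) (r n)" "0 \<le> Re (p * cis (-\<phi>))" for p n
  proof -
    have "norm (z n) \<le> norm p + norm (z n - p)" by (rule norm_triangle_sub)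
    also have "norm (z n - p) < r n" using that by (simp add: dist_norm)
    also have "norm p = norm (p * cis (-\<phi>))" by (simp add: rot_norm)
    also have "\<dots> \<le> \<bar>Re (p * cis (-\<phi>))\<bar> + \<bar>Im (p * cis (-\<phi>))\<bar>" by (rule cmod_le)
    finally show ?thesis using that by simp
  qed
  have equiv: "frontier (Lambda_set L R \<phi> c) \<inter> ball (z n) (r n) \<noteq> {} \<longleftrightarrow> c \<in> g ` (ball (z n) (r n) \<inter> Hs)"
    if n: "N \<le> n" and c: "0 < c" "c \<le> k" for n c
  proof
    assume "frontier (Lambda_set L R \<phi> c) \<inter> ball (z n) (r n) \<noteq> {}"
    then obtain p where p: "p \<in> frontier (Lambda_set L R \<phi> c)" "p \<in> ball (z n) (r n)" by blast
    note f1 = frontier_1[OF L p(1)]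
    have y: "\<bar>Im (p * cis (-\<phi>))\<bar> \<le> KL" using yKL[OF c(2) c(1)] f1 by blast
    have "norm (z n) \<le> Re (p * cis (-\<phi>)) + \<bar>Im (p * cis (-\<phi>))\<bar> + r n"
      using normb[OF p(2)] f1 R1 by linarith
    then have xR: "R < Re (p * cis (-\<phi>))" using N[OF n] y KL0 R1 unfolding M_def by linarith
    have e: "\<bar>Im (p * cis (-\<phi>))\<bar> = c * L (Re (p * cis (-\<phi>)))" by (rule frontier_2[OF L p(1) xR])
    have lx: "0 < L (Re (p * cis (-\<phi>)))" using xR R1 by (intro Lf_pos[OF L]) linarith
    have "c = g p" using e lx by (simp add: g_def)
    moreover have "p \<in> ball (z n) (r n) \<inter> Hs" using p(2) xR by (simp add: Hs_def)
    ultimately show "c \<in> g ` (ball (z n) (r n) \<inter> Hs)" by blast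
  next
    assume "c \<in> g ` (ball (z n) (r n) \<inter> Hs)"
    then obtain p where p: "p \<in> ball (z n) (r n)" "R < Re (p * cis (-\<phi>))" "c = g p" by (auto simp: Hs_def)
    have lx: "0 < L (Re (p * cis (-\<phi>)))" using p R1 by (intro Lf_pos[OF L]) linarith
    have e: "\<bar>Im (p * cis (-\<phi>))\<bar> = c * L (Re (p * cis (-\<phi>)))" using p(3) lx by (simp add: g_def)
    have "p \<in> frontier (Lambda_set L R \<phi> c)" by (rule frontier_3[OF L p(2) e])
    then show "frontier (Lambda_set L R \<phi> c) \<inter> ball (z n) (r n) \<noteq> {}" using p(1) by blast
  qed
  define D where "D n = g ` (ball (z (n + N)) (r (n + N)) \<inter> Hs) \<inter> {0<..k}" for n
  have eqset: "{c::real. c > 0 \<and> infinite {n. frontier (Lambda_set L R \<phi> c) \<inter> ball (z n) (r n) \<noteq> {}}} \<inter> {..k}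
      = limsup D"
  proof (rule set_eqI)
    fix c :: real
    have lim: "c \<in> limsup D \<longleftrightarrow> (\<forall>m. \<exists>n\<ge>m. c \<in> D n)"
      by (simp add: limsup_INF_SUP Bex_def)
    show "c \<in> {c::real. c > 0 \<and> infinite {n. frontier (Lambda_set L R \<phi> c) \<inter> ball (z n) (r n) \<noteq> {}}} \<inter> {..k}
       \<longleftrightarrow> c \<in> limsup D"
    proof
      assume "c \<in> {c::real. c > 0 \<and> infinite {n. frontier (Lambda_set L R \<phi> c) \<inter> ball (z n) (r n) \<noteq> {}}} \<inter> {..k}"
      then have c: "0 < c" "c \<le> k" and inf: "\<forall>m. \<exists>n\<ge>m. frontier (Lambda_set L R \<phi> c) \<inter> ball (z n) (r n) \<noteq> {}"
        by (auto simp: infinite_nat_iff_unbounded_le)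
      have "\<exists>n\<ge>m. c \<in> D n" for m
      proof -
        obtain n where n: "n \<ge> m + N" "frontier (Lambda_set L R \<phi> c) \<inter> ball (z n) (r n) \<noteq> {}"
          using inf by blast
        have "c \<in> g ` (ball (z n) (r n) \<inter> Hs)" using equiv[of n c] n c by simp
        then have "c \<in> D (n - N)" using n c by (simp add: D_def)
        then show ?thesis using n by (intro exI[of _ "n - N"]) auto
      qed
      then show "c \<in> limsup D" using lim by blast
    next
      assume "c \<in> limsup D"
      then have inf: "\<forall>m. \<exists>n\<ge>m. c \<in> D n" using lim by blast
      then obtain n0 where "c \<in> D n0" by blast
      then have c: "0 < c" "c \<le> k" by (auto simp: D_def)
      have "\<exists>n\<ge>m. frontier (Lambda_set L R \<phi> c) \<inter> ball (z n) (r n) \<noteq> {}" for m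
      proof -
        obtain n where n: "n \<ge> m" "c \<in> D n" using inf by blast
        then have "c \<in> g ` (ball (z (n + N)) (r (n + N)) \<inter> Hs)" by (simp add: D_def)
        then have "frontier (Lambda_set L R \<phi> c) \<inter> ball (z (n + N)) (r (n + N)) \<noteq> {}"
          using equiv[of "n + N" c] c by simp
        then show ?thesis using n by (intro exI[of _ "n + N"]) auto
      qed
      then show "c \<in> {c::real. c > 0 \<and> infinite {n. frontier (Lambda_set L R \<phi> c) \<inter> ball (z n) (r n) \<noteq> {}}} \<inter> {..k}"
        using c by (auto simp: infinite_nat_iff_unbounded_le)
    qed
  qed
  have Dmeas: "D n \<in> sets lborel" for n
  proof -
    have "is_interval (D n)" unfolding D_def g_def Hs_def
      by (intro is_interval_Int G_interval[OF L]) (auto simp: is_interval_1)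
    then show ?thesis using real_interval_borel_measurable by simp
  qed
  have Dfin: "emeasure lborel (D n) < \<infinity>" for n
  proof -
    have "emeasure lborel (D n) \<le> emeasure lborel {0..k}" by (rule emeasure_mono) (auto simp: D_def)
    also have "\<dots> < \<infinity>" using k by simp
    finally show ?thesis .
  qed
  have Dbound: "norm (measure lborel (D n)) \<le> Kc * (r (n + N) / L (norm (z (n + N))))" for n
  proof (cases "D n = {}")
    case True
    have "0 < L (norm (z (n + N)))"
      using N[of "n + N"] R1 KL0 unfolding M_def by (intro Lf_pos[OF L]) auto
    then have "0 \<le> Kc * (r (n + N) / L (norm (z (n + N))))"
      using Kc0 rpos[of "n + N"]
      by (intro mult_nonneg_nonneg divide_nonneg_pos) (auto simp: less_imp_le)
    then show ?thesis using True by simp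
  next
    case False
    define m where "m = n + N"
    have mN: "N \<le> m" by (simp add: m_def)
    define u where "u = Re (z m * cis (-\<phi>))"
    define v where "v = \<bar>Im (z m * cis (-\<phi>))\<bar>"
    define \<rho> where "\<rho> = r m"
    define Zm where "Zm = norm (z m)"
    have \<rho>: "0 < \<rho>" "\<rho> \<le> 1" using rpos N[OF mN] by (auto simp: \<rho>_def)
    have ZM: "M \<le> Zm" using N[OF mN] by (simp add: Zm_def)
    obtain c0 where "c0 \<in> D n" using False by blast
    then obtain p0 where p0: "p0 \<in> ball (z m) \<rho>" "R < Re (p0 * cis (-\<phi>))" "c0 = g p0" "0 < c0" "c0 \<le> k"
      by (auto simp: D_def m_def \<rho>_def Hs_def)
    have lx0: "0 < L (Re (p0 * cis (-\<phi>)))" using p0 R1 by (intro Lf_pos[OF L]) linarith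
    have e0: "\<bar>Im (p0 * cis (-\<phi>))\<bar> = c0 * L (Re (p0 * cis (-\<phi>)))" using p0(3) lx0 by (simp add: g_def)
    have y0: "\<bar>Im (p0 * cis (-\<phi>))\<bar> \<le> KL" using yKL[OF p0(5) p0(4), of p0] p0(2) e0 by linarith
    have cl0: "u - \<rho> < Re (p0 * cis (-\<phi>))" "Re (p0 * cis (-\<phi>)) < u + \<rho>"
      using cl[of p0 m] p0(1) by (auto simp: u_def \<rho>_def)
    have nb0: "Zm \<le> Re (p0 * cis (-\<phi>)) + \<bar>Im (p0 * cis (-\<phi>))\<bar> + \<rho>"
      using normb[of p0 m] p0 R1 by (simp add: Zm_def \<rho>_def)
    have ulow: "Zm - 2 - KL \<le> u" using nb0 cl0 y0 \<rho> by linarith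
    have uZ: "u \<le> Zm" using complex_Re_le_cmod[of "z m * cis (-\<phi>)"] by (simp add: u_def Zm_def rot_norm)
    have upos: "0 < u - \<rho>" using ulow ZM \<rho> KL0 R1 unfolding M_def by linarith
    define lo where "lo = (v - \<rho>) / L (u - \<rho>)"
    define hi where "hi = (v + \<rho>) / L (u + \<rho>)"
    have bnds: "lo \<le> c \<and> c \<le> hi" if cD: "c \<in> D n" for c
    proof -
      obtain p where p: "p \<in> ball (z m) \<rho>" "R < Re (p * cis (-\<phi>))" "c = g p"
        using cD by (auto simp: D_def m_def \<rho>_def Hs_def)
      have clp: "u - \<rho> < Re (p * cis (-\<phi>))" "Re (p * cis (-\<phi>)) < u + \<rho>"
        "v - \<rho> < \<bar>Im (p * cis (-\<phi>))\<bar>" "\<bar>Im (p * cis (-\<phi>))\<bar> < v + \<rho>"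
        using cl[of p m] p(1) by (auto simp: u_def v_def \<rho>_def)
      show ?thesis using Lf_bounds[OF L upos clp] p(3) by (simp add: g_def lo_def hi_def)
    qed
    have c0b: "lo \<le> c0" "c0 \<le> hi" using bnds \<open>c0 \<in> D n\<close> by auto
    have Lum: "0 < L (u - \<rho>)" using upos by (intro Lf_pos[OF L])
    have vk: "v - \<rho> \<le> k * L (u - \<rho>)"
    proof -
      have "(v - \<rho>) / L (u - \<rho>) \<le> k" using c0b(1) p0(5) by (simp add: lo_def)
      then show ?thesis using Lum by (simp add: pos_divide_le_eq)
    qed
    have width: "hi - lo \<le> Kc * \<rho> / L Zm" unfolding hi_def lo_def Kc_def
    proof (rule Lf_width[OF L k \<rho>(1) _ _ _ uZ _ vk])
      show "2 * R \<le> u" using ulow ZM KL0 R1 unfolding M_def by linarith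
      show "2 * \<rho> < u" using ulow ZM KL0 R1 \<rho> unfolding M_def by linarith
      show "Zm \<le> 2 * u" using ulow ZM KL0 R1 unfolding M_def by linarith
      show "1 \<le> Zm" using ZM KL0 R1 unfolding M_def by linarith
    qed
    have sub: "D n \<subseteq> {lo..hi}" using bnds by auto
    have fm: "{lo..hi} \<in> fmeasurable lborel" using fmeasurable_cbox[of lo hi] by (simp add: cbox_interval)
    have "measure lborel (D n) \<le> measure lborel {lo..hi}"
      by (rule measure_mono_fmeasurable[OF sub Dmeas fm])
    also have "\<dots> = hi - lo" using c0b by (simp add: measure_def)
    also have "\<dots> \<le> Kc * \<rho> / L Zm" by (rule width)
    finally show ?thesis by (simp add: m_def \<rho>_def Zm_def)
  qed
  have "limsup D \<in> null_sets lborel"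
  proof (rule borel_cantelli_limsup1[OF Dmeas Dfin])
    show "summable (\<lambda>n. measure lborel (D n))"
    proof -
      have sg: "summable (\<lambda>n. Kc * (r (n + N) / L (norm (z (n + N)))))"
        by (intro summable_mult summable_ignore_initial_segment[OF sm])
      show ?thesis by (rule summable_comparison_test[OF _ sg]) (use Dbound in blast)
    qed
  qed
  then show ?thesis using eqset by simp
qed

theorem theorem2:
  fixes L :: "real \<Rightarrow> real" and \<beta> R :: real
    and z :: "nat \<Rightarrow> complex" and r :: "nat \<Rightarrow> real" and \<phi> :: real
  assumes "L_function L \<beta> R"
    and "L_set L z r"
    and "0 \<le> \<phi>" and "\<phi> \<le> 2 * pi"
  shows "{c::real. c > 0 \<and>
            infinite {n. frontier (Lambda_set L R \<phi> c) \<inter> ball (z n) (r n) \<noteq> {}}}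
           \<in> null_sets lborel \<and>
         (\<integral>\<^sup>+ x. indicator (projection_set z r) x * ennreal (1 / L x) \<partial>lborel) < \<infinity>"
proof
  define C where "C = {c::real. c > 0 \<and>
            infinite {n. frontier (Lambda_set L R \<phi> c) \<inter> ball (z n) (r n) \<noteq> {}}}"
  have "C = (\<Union>k::nat. C \<inter> {..real k})"
  proof (rule set_eqI)
    fix c
    obtain k :: nat where "c \<le> real k" using real_arch_simple by blast
    then show "c \<in> C \<longleftrightarrow> c \<in> (\<Union>k::nat. C \<inter> {..real k})" by auto
  qed
  also have "\<dots> \<in> null_sets lborel"
    by (intro null_sets_UN) (unfold C_def, rule part1k[OF assms(1,2)], simp)
  finally show "C \<in> null_sets lborel" unfolding C_def .
  show "(\<integral>\<^sup>+ x. indicator (projection_set z r) x * ennreal (1 / L x) \<partial>lborel) < \<infinity>"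
    by (rule part2[OF assms(1,2)])
qed

end
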